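(* Let $I$ be a countable index set with nested finite subsets $I_1\subset I_2\subset\cdots$, $\bigcup_nI_n=I$, let $W$ be a compact Hausdorff space, $m:X^{\mathbb{R}}\to C^*(W)$ a sequence measure function, and $p\in\mathbb{N}^*$ a free ultrafilter. Then there exists $w_p\in W$ such that $\mu(\mathbf{x})(p)=m(\mathbf{x})(w_p)$ for all $\mathbf{x}\in X^{\mathbb{R}}$.
   Context: A nonnegative real sequence $\mathbf{x}$ is frame compatible if $0\le x_1\le|I_1|$ and $0\le x_i-x_{i-1}\le|I_i\setminus I_{i-1}|$ for $i\ge 2$; $X$ is the set of these, $X^+=\{c\mathbf{x}:\mathbf{x}\in X,c\ge0\}$, $X^{\mathbb{R}}=\{\mathbf{x}^1-\mathbf{x}^2:\mathbf{x}^j\in X^+\}$. $\mathbf{x}\approx\mathbf{y}$ iff $\lim_n(x_n-y_n)/|I_n|=0$; for nonnegative sequences $\mathbf{y}\leqq\mathbf{x}$ iff $\liminf_n(x_n-y_n)/|I_n|\ge0$. $C^*(W)$: real continuous functions on $W$. A sequence measure function is a linear $m:X^{\mathbb{R}}\to C^*(W)$ with: $m(\mathbf{x})=m(\mathbf{y})$ iff $\mathbf{x}\approx\mathbf{y}$ for $\mathbf{x},\mathbf{y}\in X^{\mathbb{R}}$; $m(\mathbf{x})\le m(\mathbf{y})$ pointwise iff $\mathbf{x}\leqq\mathbf{y}$ for $\mathbf{x},\mathbf{y}\in X^+$; $m(\mathbf{i})=1$ where $\mathbf{i}=(|I_1|,|I_2|,\dots)$. $\mathbb{N}^*$ is the set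 of free ultrafilters on $\mathbb{N}$; for a bounded sequence $\mathbf{y}$, $p\text{-}\lim\mathbf{y}=c$ iff for every $\varepsilon>0$, $\{n:|y_n-c|<\varepsilon\}\in p$. The ultrafilter sequence measure function is $\mu(\mathbf{x})(p)=p\text{-}\lim_n x_n/|I_n|$ for $\mathbf{x}\in X^{\mathbb{R}}$. *)

theory Defs
  imports "HOL-Analysis.Analysis" "HOL-Library.Liminf_Limsup"
begin

text \<open>Sequences are indexed from 0: Is 0 \<subseteq> Is 1 \<subseteq> ... play the role of I_1 \<subseteq> I_2 \<subseteq> ...\<close>

definition frame_compatible :: "(nat \<Rightarrow> 'a set) \<Rightarrow> (nat \<Rightarrow> real) \<Rightarrow> bool" where
  "frame_compatible Is x \<longleftrightarrow>
     (\<forall>n. 0 \<le> x n) \<and> 0 \<le> x 0 \<and> x 0 \<le> real (card (Is 0)) \<and>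
     (\<forall>n. 0 \<le> x (Suc n) - x n \<and> x (Suc n) - x n \<le> real (card (Is (Suc n) - Is n)))"

definition Xset :: "(nat \<Rightarrow> 'a set) \<Rightarrow> (nat \<Rightarrow> real) set" where
  "Xset Is = {x. frame_compatible Is x}"

definition Xplus :: "(nat \<Rightarrow> 'a set) \<Rightarrow> (nat \<Rightarrow> real) set" where
  "Xplus Is = {(\<lambda>n. c * x n) | c x. x \<in> Xset Is \<and> 0 \<le> c}"

definition XR :: "(nat \<Rightarrow> 'a set) \<Rightarrow> (nat \<Rightarrow> real) set" where
  "XR Is = {(\<lambda>n. x1 n - x2 n) | x1 x2. x1 \<in> Xplus Is \<and> x2 \<in> Xplus Is}"

definition seq_approx :: "(nat \<Rightarrow> 'a set) \<Rightarrow> (nat \<Rightarrow> real) \<Rightarrow> (nat \<Rightarrow> real) \<Rightarrow> bool" where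
  "seq_approx Is x y \<longleftrightarrow> (\<lambda>n. (x n - y n) / real (card (Is n))) \<longlonglongrightarrow> 0"

definition seq_leqq :: "(nat \<Rightarrow> 'a set) \<Rightarrow> (nat \<Rightarrow> real) \<Rightarrow> (nat \<Rightarrow> real) \<Rightarrow> bool" where
  "seq_leqq Is y x \<longleftrightarrow>
     liminf (\<lambda>n. ereal ((x n - y n) / real (card (Is n)))) \<ge> 0"

definition iseq :: "(nat \<Rightarrow> 'a set) \<Rightarrow> nat \<Rightarrow> real" where
  "iseq Is = (\<lambda>n. real (card (Is n)))"

text \<open>Sequence measure function with values in C*(W), W the topological space of type 'w;
  elements of C*(W) are represented as continuous functions 'w \<Rightarrow> real.\<close>
definition sequence_measure_function ::
  "(nat \<Rightarrow> 'a set) \<Rightarrow> ((nat \<Rightarrow> real) \<Rightarrow> ('w::topological_space \<Rightarrow> real)) \<Rightarrow> bool" where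
  "sequence_measure_function Is m \<longleftrightarrow>
     (\<forall>x\<in>XR Is. continuous_on UNIV (m x)) \<and>
     (\<forall>x\<in>XR Is. \<forall>y\<in>XR Is. m (\<lambda>n. x n + y n) = (\<lambda>w. m x w + m y w)) \<and>
     (\<forall>x\<in>XR Is. \<forall>c::real. m (\<lambda>n. c * x n) = (\<lambda>w. c * m x w)) \<and>
     (\<forall>x\<in>XR Is. \<forall>y\<in>XR Is. m x = m y \<longleftrightarrow> seq_approx Is x y) \<and>
     (\<forall>x\<in>Xplus Is. \<forall>y\<in>Xplus Is. (\<forall>w. m x w \<le> m y w) \<longleftrightarrow> seq_leqq Is x y) \<and>
     m (iseq Is) = (\<lambda>w. 1)"

definition free_ultrafilter :: "nat filter \<Rightarrow> bool" where
  "free_ultrafilter p \<longleftrightarrow>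
     p \<noteq> bot \<and>
     (\<forall>P. eventually P p \<or> eventually (\<lambda>n. \<not> P n) p) \<and>
     (\<forall>k. \<not> eventually (\<lambda>n. n = k) p)"

definition plim_eq :: "nat filter \<Rightarrow> (nat \<Rightarrow> real) \<Rightarrow> real \<Rightarrow> bool" where
  "plim_eq p y c \<longleftrightarrow> (\<forall>\<epsilon>>0. eventually (\<lambda>n. \<bar>y n - c\<bar> < \<epsilon>) p)"

definition ultra_mu :: "(nat \<Rightarrow> 'a set) \<Rightarrow> (nat \<Rightarrow> real) \<Rightarrow> nat filter \<Rightarrow> real" where
  "ultra_mu Is x p = (THE c. plim_eq p (\<lambda>n. x n / real (card (Is n))) c)"

end

theory Submission
  imports Defs
begin

definition lipc :: "(nat \<Rightarrow> 'a set) \<Rightarrow> real \<Rightarrow> (nat \<Rightarrow> real) \<Rightarrow> bool" where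
  "lipc Is C x \<longleftrightarrow> 0 \<le> C \<and> \<bar>x 0\<bar> \<le> C * real (card (Is 0)) \<and>
     (\<forall>n. \<bar>x (Suc n) - x n\<bar> \<le> C * real (card (Is (Suc n) - Is n)))"

lemma card_step:
  assumes "\<And>n. finite (Is n)" "\<And>n. Is n \<subseteq> Is (Suc n)"
  shows "real (card (Is (Suc n))) = real (card (Is n)) + real (card (Is (Suc n) - Is n))"
proof -
  have "card (Is (Suc n) - Is n) = card (Is (Suc n)) - card (Is n)"
    using assms by (simp add: card_Diff_subset)
  moreover have "card (Is n) \<le> card (Is (Suc n))" using assms by (simp add: card_mono)
  ultimately show ?thesis by simp
qed

lemma Xplus_lip:
  assumes "x \<in> Xplus Is" shows "\<exists>C. lipc Is C x"
proof -
  obtain c y where x: "x = (\<lambda>n. c * y n)" and y: "frame_compatible Is y" and c: "0 \<le> c"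
    using assms unfolding Xplus_def Xset_def by auto
  have "lipc Is c x" unfolding lipc_def x using y c
    by (auto simp: frame_compatible_def abs_mult simp flip: right_diff_distrib intro!: mult_left_mono)
  then show ?thesis by blast
qed

lemma XR_lip:
  assumes "x \<in> XR Is" shows "\<exists>C. lipc Is C x"
proof -
  obtain a b where x: "x = (\<lambda>n. a n - b n)" and a: "a \<in> Xplus Is" and b: "b \<in> Xplus Is"
    using assms unfolding XR_def by auto
  obtain C1 C2 where 1: "lipc Is C1 a" and 2: "lipc Is C2 b" using Xplus_lip a b by blast
  have "lipc Is (C1 + C2) x"
    unfolding lipc_def x
  proof (intro conjI allI)
    show "0 \<le> C1 + C2" using 1 2 by (simp add: lipc_def)
    have "\<bar>a 0 - b 0\<bar> \<le> \<bar>a 0\<bar> + \<bar>b 0\<bar>" by linarith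
    then show "\<bar>a 0 - b 0\<bar> \<le> (C1 + C2) * real (card (Is 0))"
      using 1 2 by (simp add: lipc_def distrib_right)
    fix n
    have "\<bar>a (Suc n) - b (Suc n) - (a n - b n)\<bar> \<le> \<bar>a (Suc n) - a n\<bar> + \<bar>b (Suc n) - b n\<bar>" by linarith
    then show "\<bar>a (Suc n) - b (Suc n) - (a n - b n)\<bar> \<le> (C1 + C2) * real (card (Is (Suc n) - Is n))"
      using 1 2 unfolding lipc_def distrib_right by (smt (verit))
  qed
  then show ?thesis by blast
qed

lemma lip_XR:
  assumes fin: "\<And>n. finite (Is n)" and nest: "\<And>n. Is n \<subseteq> Is (Suc n)"
    and l: "lipc Is C x"
  shows "x \<in> XR Is"
proof -
  define D where "D = C + 1"
  have D: "D > 0" using l by (simp add: lipc_def D_def)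
  have lD: "\<bar>x 0\<bar> \<le> D * real (card (Is 0))"
    "\<And>n. \<bar>x (Suc n) - x n\<bar> \<le> D * real (card (Is (Suc n) - Is n))"
    using l unfolding lipc_def D_def by (auto simp: distrib_right intro: order_trans)
  define a where "a = (\<lambda>n. (x n + D * real (card (Is n))) / (2 * D))"
  define b where "b = (\<lambda>n. real (card (Is n)))"
  have cs: "\<And>n. real (card (Is (Suc n))) = real (card (Is n)) + real (card (Is (Suc n) - Is n))"
    using card_step[of Is, OF fin nest] by blast
  have a0: "0 \<le> a 0 \<and> a 0 \<le> real (card (Is 0))"
    using lD(1) D unfolding a_def by (auto simp: field_simps abs_le_iff)
  have as: "0 \<le> a (Suc n) - a n \<and> a (Suc n) - a n \<le> real (card (Is (Suc n) - Is n))" for n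
  proof -
    have "a (Suc n) - a n = (x (Suc n) - x n + D * real (card (Is (Suc n) - Is n))) / (2 * D)"
      unfolding a_def using D cs[of n] by (simp add: field_simps)
    moreover have "0 \<le> (x (Suc n) - x n + D * real (card (Is (Suc n) - Is n))) / (2 * D)"
      using lD(2)[of n] D by (intro divide_nonneg_nonneg) (auto simp: abs_le_iff)
    moreover have "(x (Suc n) - x n + D * real (card (Is (Suc n) - Is n))) / (2 * D) \<le> real (card (Is (Suc n) - Is n))"
      using lD(2)[of n] D by (subst pos_divide_le_eq) (auto simp: abs_le_iff)
    ultimately show ?thesis by simp
  qed
  have anonneg: "0 \<le> a n" for n
  proof (induction n)
    case 0 then show ?case using a0 by simp
  next
    case (Suc n) then show ?case using as[of n] by linarith
  qed
  have "frame_compatible Is a" unfolding frame_compatible_def using a0 as anonneg by blast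
  then have aX: "(\<lambda>n. (2 * D) * a n) \<in> Xplus Is"
    unfolding Xplus_def Xset_def using D by force
  have "frame_compatible Is b" unfolding frame_compatible_def b_def using cs by simp
  then have bX: "(\<lambda>n. D * b n) \<in> Xplus Is"
    unfolding Xplus_def Xset_def using D by force
  have "x = (\<lambda>n. (2 * D) * a n - D * b n)" unfolding a_def b_def using D by (auto simp: field_simps)
  then show ?thesis unfolding XR_def using aX bX by (intro CollectI exI[of _ "\<lambda>n. (2 * D) * a n"] exI[of _ "\<lambda>n. D * b n"]) auto
qed


lemma lip_add: "lipc Is C x \<Longrightarrow> lipc Is D y \<Longrightarrow> lipc Is (C + D) (\<lambda>n. x n + y n)"
  unfolding lipc_def
proof (elim conjE, intro conjI allI)
  fix n
  assume "\<forall>n. \<bar>x (Suc n) - x n\<bar> \<le> C * real (card (Is (Suc n) - Is n))"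
    "\<forall>n. \<bar>y (Suc n) - y n\<bar> \<le> D * real (card (Is (Suc n) - Is n))"
  then have "\<bar>x (Suc n) - x n\<bar> \<le> C * real (card (Is (Suc n) - Is n))"
    "\<bar>y (Suc n) - y n\<bar> \<le> D * real (card (Is (Suc n) - Is n))" by auto
  then show "\<bar>x (Suc n) + y (Suc n) - (x n + y n)\<bar> \<le> (C + D) * real (card (Is (Suc n) - Is n))"
    by (simp add: distrib_right)
qed (auto simp: distrib_right intro: order_trans[OF abs_triangle_ineq])

lemma lip_scale: "lipc Is C x \<Longrightarrow> lipc Is (\<bar>c\<bar> * C) (\<lambda>n. c * x n)"
  unfolding lipc_def
  by (auto simp: abs_mult mult.assoc simp flip: right_diff_distrib intro!: mult_left_mono)

lemma lip_abs: "lipc Is C x \<Longrightarrow> lipc Is C (\<lambda>n. \<bar>x n\<bar>)"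
  unfolding lipc_def
  by (auto intro: order_trans[OF abs_triangle_ineq3])

lemma lip_zero: "lipc Is 0 (\<lambda>n. 0)"
  unfolding lipc_def by auto

lemma lip_iseq: "\<lbrakk>\<And>n. finite (Is n); \<And>n. Is n \<subseteq> Is (Suc n)\<rbrakk> \<Longrightarrow> lipc Is 1 (iseq Is)"
  unfolding lipc_def iseq_def using card_step[of Is] by auto

lemma lip_bound:
  assumes fin: "\<And>n. finite (Is n)" and nest: "\<And>n. Is n \<subseteq> Is (Suc n)" and l: "lipc Is C x"
  shows "\<bar>x n\<bar> \<le> C * real (card (Is n))"
proof (induction n)
  case 0 then show ?case using l by (simp add: lipc_def)
next
  case (Suc n)
  have "\<bar>x (Suc n)\<bar> \<le> \<bar>x n\<bar> + \<bar>x (Suc n) - x n\<bar>" by linarith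
  also have "\<dots> \<le> C * real (card (Is n)) + C * real (card (Is (Suc n) - Is n))"
    using Suc l by (intro add_mono) (auto simp: lipc_def)
  also have "\<dots> = C * real (card (Is (Suc n)))"
    using card_step[of Is, OF fin nest, of n] by (simp add: distrib_left)
  finally show ?case .
qed


lemma fu_ge:
  assumes "free_ultrafilter p" shows "eventually (\<lambda>n. N \<le> n) p"
proof -
  have "\<forall>k\<in>{..<N}. eventually (\<lambda>n. n \<noteq> k) p"
    using assms unfolding free_ultrafilter_def by blast
  then have "eventually (\<lambda>n. \<forall>k\<in>{..<N}. n \<noteq> k) p"
    by (rule eventually_ball_finite[rotated]) simp
  then show ?thesis by (rule eventually_mono) (auto simp: not_less[symmetric])
qed

lemma fu_seq:
  assumes "free_ultrafilter p" "eventually P sequentially" shows "eventually P p"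
proof -
  obtain N where "\<And>n. N \<le> n \<Longrightarrow> P n" using assms(2) unfolding eventually_sequentially by blast
  then show ?thesis using fu_ge[OF assms(1), of N] by (auto elim: eventually_mono)
qed

lemma plim_unique:
  assumes "free_ultrafilter p" "plim_eq p r c" "plim_eq p r d" shows "c = d"
proof (rule ccontr)
  assume ne: "c \<noteq> d"
  define e where "e = \<bar>c - d\<bar> / 2"
  have e: "e > 0" using ne by (simp add: e_def)
  have "eventually (\<lambda>n. \<bar>r n - c\<bar> < e \<and> \<bar>r n - d\<bar> < e) p"
    using assms(2,3) e unfolding plim_eq_def by (auto intro: eventually_conj)
  then have "eventually (\<lambda>n. False) p"
  proof (rule eventually_mono)
    fix n assume h: "\<bar>r n - c\<bar> < e \<and> \<bar>r n - d\<bar> < e"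
    have "\<bar>c - d\<bar> \<le> \<bar>r n - d\<bar> + \<bar>r n - c\<bar>"
      using abs_triangle_ineq4[of "r n - d" "r n - c"] by simp
    then show False using conjunct1[OF h] conjunct2[OF h] e_def by argo
  qed
  then show False using assms(1) by (simp add: free_ultrafilter_def)
qed

lemma plim_exists:
  assumes fu: "free_ultrafilter p" and B: "\<And>n. \<bar>r n\<bar> \<le> B" shows "\<exists>c. plim_eq p r c"
proof -
  have nb: "p \<noteq> bot" and uf: "\<And>P. eventually P p \<or> eventually (\<lambda>n. \<not> P n) p"
    using fu unfolding free_ultrafilter_def by auto
  define S where "S = {t. eventually (\<lambda>n. t \<le> r n) p}"
  have "-B \<le> r n" for n using B[of n] by (simp add: abs_le_iff)
  then have mS: "-B \<in> S" unfolding S_def by (simp add: always_eventually)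
  have bS: "t \<le> B" if "t \<in> S" for t
  proof (rule ccontr)
    assume "\<not> t \<le> B"
    have "eventually (\<lambda>n. t \<le> r n) p" using that unfolding S_def by simp
    then have "eventually (\<lambda>n. False) p"
    proof (rule eventually_mono)
      fix n assume "t \<le> r n" then show False using B[of n] \<open>\<not> t \<le> B\<close> by (simp add: abs_le_iff)
    qed
    then show False using nb by simp
  qed
  have bdd: "bdd_above S" using bS by (auto simp: bdd_above_def)
  define c where "c = Sup S"
  have "plim_eq p r c" unfolding plim_eq_def
  proof (intro allI impI)
    fix e :: real assume e: "e > 0"
    have "c - e < Sup S" using e by (simp add: c_def)
    then obtain t where t: "t \<in> S" "c - e < t" using less_cSup_iff[of S] mS bdd by blast
    have "c + e / 2 \<notin> S"
    proof
      assume "c + e / 2 \<in> S"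
      then have "c + e / 2 \<le> c" unfolding c_def using cSup_upper bdd by blast
      then show False using e by simp
    qed
    then have ev2: "eventually (\<lambda>n. \<not> (c + e / 2 \<le> r n)) p" using uf unfolding S_def by blast
    have ev1: "eventually (\<lambda>n. t \<le> r n) p" using t(1) unfolding S_def by simp
    show "eventually (\<lambda>n. \<bar>r n - c\<bar> < e) p"
      using eventually_conj[OF ev1 ev2] by (rule eventually_mono) (use t e in auto)
  qed
  then show ?thesis by blast
qed

context
  fixes Is :: "nat \<Rightarrow> 'a set"
  assumes fin: "\<And>n. finite (Is n)" and nest: "\<And>n. Is n \<subseteq> Is (Suc n)"
begin

lemma XR_add: "x \<in> XR Is \<Longrightarrow> y \<in> XR Is \<Longrightarrow> (\<lambda>n. x n + y n) \<in> XR Is"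
  using XR_lip lip_add lip_XR[of Is, OF fin nest] by metis

lemma XR_scale: "x \<in> XR Is \<Longrightarrow> (\<lambda>n. c * x n) \<in> XR Is"
  using XR_lip lip_scale lip_XR[of Is, OF fin nest] by metis

lemma XR_abs: "x \<in> XR Is \<Longrightarrow> (\<lambda>n. \<bar>x n\<bar>) \<in> XR Is"
  using XR_lip lip_abs lip_XR[of Is, OF fin nest] by metis

lemma XR_iseq: "iseq Is \<in> XR Is"
  using lip_iseq[of Is, OF fin nest] lip_XR[of Is, OF fin nest] by blast

lemma XR_zero: "(\<lambda>n. 0) \<in> XR Is"
  using lip_zero lip_XR[of Is, OF fin nest] by blast

lemma XR_diff: "x \<in> XR Is \<Longrightarrow> y \<in> XR Is \<Longrightarrow> (\<lambda>n. x n - y n) \<in> XR Is"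
  using XR_add[of x "\<lambda>n. (-1) * y n"] XR_scale[of y "-1"] by simp

lemma XR_sum: "finite C \<Longrightarrow> (\<And>x. x \<in> C \<Longrightarrow> f x \<in> XR Is) \<Longrightarrow> (\<lambda>n. \<Sum>x\<in>C. f x n) \<in> XR Is"
proof (induction C rule: finite_induct)
  case empty then show ?case using XR_zero by simp
next
  case (insert a C)
  then show ?case using XR_add[of "f a" "\<lambda>n. \<Sum>x\<in>C. f x n"] by simp
qed

lemma XR_bound: "x \<in> XR Is \<Longrightarrow> \<exists>C. \<forall>n. \<bar>x n / real (card (Is n))\<bar> \<le> C"
proof -
  assume "x \<in> XR Is"
  then obtain C where l: "lipc Is C x" using XR_lip by blast
  have "\<bar>x n / real (card (Is n))\<bar> \<le> C" for n
  proof (cases "card (Is n) = 0")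
    case True then show ?thesis using l by (simp add: lipc_def)
  next
    case False
    then show ?thesis using lip_bound[of Is, OF fin nest l, of n]
      by (simp add: abs_div pos_divide_le_eq)
  qed
  then show ?thesis by blast
qed

end


lemma Xplus_XR:
  assumes fin: "\<And>n. finite (Is n)" and nest: "\<And>n. Is n \<subseteq> Is (Suc n)" and x: "x \<in> Xplus Is"
  shows "x \<in> XR Is"
  using Xplus_lip[OF x] lip_XR[of Is, OF fin nest] by blast

context
  fixes Is :: "nat \<Rightarrow> 'a set" and m :: "(nat \<Rightarrow> real) \<Rightarrow> ('w::topological_space \<Rightarrow> real)"
  assumes fin: "\<And>n. finite (Is n)" and nest: "\<And>n. Is n \<subseteq> Is (Suc n)"
    and smf: "sequence_measure_function Is m"
begin

lemma m_add: "u \<in> XR Is \<Longrightarrow> v \<in> XR Is \<Longrightarrow> m (\<lambda>n. u n + v n) w = m u w + m v w"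
  using smf unfolding sequence_measure_function_def by simp

lemma m_scale: "u \<in> XR Is \<Longrightarrow> m (\<lambda>n. c * u n) w = c * m u w"
  using smf unfolding sequence_measure_function_def by simp

lemma m_one: "m (iseq Is) w = 1"
  using smf unfolding sequence_measure_function_def by simp

lemma m_diff: "u \<in> XR Is \<Longrightarrow> v \<in> XR Is \<Longrightarrow> m (\<lambda>n. u n - v n) w = m u w - m v w"
proof -
  assume u: "u \<in> XR Is" and v: "v \<in> XR Is"
  have eq: "(\<lambda>n. u n - v n) = (\<lambda>n. u n + (-1) * v n)" by simp
  have "m (\<lambda>n. u n - v n) w = m u w + m (\<lambda>n. (-1) * v n) w"
    unfolding eq by (rule m_add[OF u XR_scale[of Is, OF fin nest v]])
  also have "\<dots> = m u w - m v w" using m_scale[OF v, of "-1" w] by simp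
  finally show ?thesis .
qed

lemma m_pos: "s \<in> XR Is \<Longrightarrow> (\<And>n. 0 \<le> s n) \<Longrightarrow> 0 \<le> m s w"
proof -
  assume s: "s \<in> XR Is" and nn: "\<And>n. 0 \<le> s n"
  obtain a b where sab: "s = (\<lambda>n. a n - b n)" and a: "a \<in> Xplus Is" and b: "b \<in> Xplus Is"
    using s unfolding XR_def by auto
  have "0 \<le> liminf (\<lambda>n. ereal ((a n - b n) / real (card (Is n))))"
    by (rule Liminf_bounded, rule always_eventually) (use nn sab in \<open>auto dest: fun_cong\<close>)
  then have "seq_leqq Is b a" unfolding seq_leqq_def by simp
  then have "\<forall>w. m b w \<le> m a w" using smf a b unfolding sequence_measure_function_def by blast
  then show ?thesis using m_diff[OF Xplus_XR[of Is, OF fin nest a] Xplus_XR[of Is, OF fin nest b]] sab by simp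
qed

lemma m_mono: "u \<in> XR Is \<Longrightarrow> v \<in> XR Is \<Longrightarrow> (\<And>n. u n \<le> v n) \<Longrightarrow> m u w \<le> m v w"
  using m_pos[of "\<lambda>n. v n - u n"] m_diff[of v u] XR_diff[of Is, OF fin nest, of v u] by simp

lemma m_liminf:
  assumes u: "u \<in> XR Is" and pos: "\<And>w. 0 \<le> m u w"
  shows "0 \<le> liminf (\<lambda>n. ereal (u n / real (card (Is n))))"
proof -
  obtain a b where sab: "u = (\<lambda>n. a n - b n)" and a: "a \<in> Xplus Is" and b: "b \<in> Xplus Is"
    using u unfolding XR_def by auto
  have "\<forall>w. m b w \<le> m a w"
    using pos m_diff[OF Xplus_XR[of Is, OF fin nest a] Xplus_XR[of Is, OF fin nest b]] sab by (simp add: le_diff_eq)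
  then have "seq_leqq Is b a" using smf a b unfolding sequence_measure_function_def by blast
  then show ?thesis unfolding seq_leqq_def sab .
qed

end


theorem theorem5p22:
  fixes I :: "'a set" and Is :: "nat \<Rightarrow> 'a set"
    and m :: "(nat \<Rightarrow> real) \<Rightarrow> ('w::t2_space \<Rightarrow> real)" and p :: "nat filter"
  assumes "countable I"
    and "I \<noteq> {}"
    and "\<And>n. finite (Is n)"
    and "\<And>n. Is n \<subseteq> Is (Suc n)"
    and "(\<Union>n. Is n) = I"
    and "compact (UNIV :: 'w set)"
    and "sequence_measure_function Is m"
    and "free_ultrafilter p"
  shows "\<exists>wp. \<forall>x\<in>XR Is. ultra_mu Is x p = m x wp"
proof -
  note fin = assms(3) and nest = assms(4) and smf = assms(7) and fu = assms(8)
  note mdiff = m_diff[of Is m, OF fin nest smf]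
  note mscale = m_scale[of Is m, OF fin nest smf]
  note mone = m_one[of Is m, OF fin nest smf]
  note mmono = m_mono[of Is m, OF fin nest smf]
  note mlim = m_liminf[of Is m, OF fin nest smf]
  note XRdiff = XR_diff[of Is, OF fin nest]
  note XRscale = XR_scale[of Is, OF fin nest]
  note XRabs = XR_abs[of Is, OF fin nest]
  note XRsum = XR_sum[of Is, OF fin nest]
  note XRiseq = XR_iseq[of Is, OF fin nest]
  have nb: "p \<noteq> bot" using fu by (simp add: free_ultrafilter_def)
  define mu where "mu x = ultra_mu Is x p" for x
  have mu: "plim_eq p (\<lambda>n. x n / real (card (Is n))) (mu x)" if x: "x \<in> XR Is" for x
  proof -
    obtain B where "\<forall>n. \<bar>x n / real (card (Is n))\<bar> \<le> B" using XR_bound[of Is, OF fin nest x] by blast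
    then obtain c where c: "plim_eq p (\<lambda>n. x n / real (card (Is n))) c"
      using plim_exists[OF fu, of "\<lambda>n. x n / real (card (Is n))" B] by blast
    have "ultra_mu Is x p = c" unfolding ultra_mu_def
      by (rule the_equality[where P="\<lambda>c. plim_eq p (\<lambda>n. x n / real (card (Is n))) c", OF c])
        (use plim_unique[OF fu _ c] in blast)
    then show ?thesis using c by (simp add: mu_def)
  qed
  obtain N where N: "Is N \<noteq> {}" using assms(2,5) by blast
  have "0 < card (Is n)" if "N \<le> n" for n
  proof -
    have "Is N \<subseteq> Is n" using lift_Suc_mono_le[of Is, OF nest that] .
    then show ?thesis using N fin[of n] by (auto simp: card_gt_0_iff)
  qed
  then have cardpos: "eventually (\<lambda>n. 0 < card (Is n)) p"
    using fu_ge[OF fu, of N] by (auto elim: eventually_mono)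
  have "UNIV \<inter> (\<Inter>x\<in>XR Is. {w. m x w = mu x}) \<noteq> {}"
  proof (rule compact_imp_fip_image[OF assms(6)])
    fix x assume "x \<in> XR Is"
    then have "continuous_on UNIV (m x)" using smf unfolding sequence_measure_function_def by blast
    then show "closed {w. m x w = mu x}"
      using closed_Collect_eq[of "m x" "\<lambda>_. mu x"] continuous_on_const by blast
  next
    fix C assume finC: "finite C" and CX: "C \<subseteq> XR Is"
    show "UNIV \<inter> (\<Inter>x\<in>C. {w. m x w = mu x}) \<noteq> {}"
    proof
      assume empty: "UNIV \<inter> (\<Inter>x\<in>C. {w. m x w = mu x}) = {}"
      define z where "z x = (\<lambda>n. x n - mu x * iseq Is n)" for x
      define y where "y = (\<lambda>n. \<Sum>x\<in>C. \<bar>z x n\<bar>)"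
      have zX: "z x \<in> XR Is" if "x \<in> C" for x
        unfolding z_def using XRdiff[OF _ XRscale[OF XRiseq]] that CX by blast
      have azX: "(\<lambda>n. \<bar>z x n\<bar>) \<in> XR Is" if "x \<in> C" for x using XRabs[OF zX[OF that]] .
      have yX: "y \<in> XR Is" unfolding y_def using XRsum[OF finC, of "\<lambda>x n. \<bar>z x n\<bar>"] azX by blast
      have mz: "m (z x) w = m x w - mu x" if "x \<in> C" for x w
        unfolding z_def using mdiff[OF _ XRscale[OF XRiseq], of x] mscale[OF XRiseq] mone that CX by auto
      have ypos: "0 < m y w" for w
      proof -
        obtain x0 where x0: "x0 \<in> C" "m x0 w \<noteq> mu x0" using empty by blast
        have "m (z x0) w \<le> m (\<lambda>n. \<bar>z x0 n\<bar>) w" by (rule mmono[OF zX[OF x0(1)] azX[OF x0(1)]]) simp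
        moreover have "m (\<lambda>n. (-1) * z x0 n) w \<le> m (\<lambda>n. \<bar>z x0 n\<bar>) w"
          by (rule mmono[OF XRscale[OF zX[OF x0(1)]] azX[OF x0(1)]]) simp
        moreover have "m (\<lambda>n. (-1) * z x0 n) w = - m (z x0) w" using mscale[OF zX[OF x0(1)], of "-1" w] by simp
        moreover have "m (\<lambda>n. \<bar>z x0 n\<bar>) w \<le> m y w"
          by (rule mmono[OF azX[OF x0(1)] yX]) (use finC x0(1) in \<open>auto simp: y_def intro!: member_le_sum\<close>)
        moreover have "m (z x0) w \<noteq> 0" using mz[OF x0(1)] x0(2) by simp
        ultimately show ?thesis by linarith
      qed
      have "continuous_on UNIV (m y)" using smf yX unfolding sequence_measure_function_def by blast
      then obtain w0 where w0: "\<And>w. m y w0 \<le> m y w"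
        using continuous_attains_inf[OF assms(6)] by blast
      define d where "d = m y w0"
      have d: "0 < d" using ypos by (simp add: d_def)
      define v where "v = (\<lambda>n. y n - d * iseq Is n)"
      have vX: "v \<in> XR Is" unfolding v_def using XRdiff[OF yX XRscale[OF XRiseq]] .
      have "m v w = m y w - d" for w
        unfolding v_def using mdiff[OF yX XRscale[OF XRiseq]] mscale[OF XRiseq] mone by simp
      then have "0 \<le> m v w" for w using w0 d_def by simp
      then have "0 \<le> liminf (\<lambda>n. ereal (v n / real (card (Is n))))" using mlim[OF vX] by blast
      then have "ereal (- d / 2) < liminf (\<lambda>n. ereal (v n / real (card (Is n))))"
        using d by (simp add: order_less_le_trans[of _ 0])
      then have "eventually (\<lambda>n. ereal (- d / 2) < ereal (v n / real (card (Is n)))) sequentially"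
        by (rule less_LiminfD)
      then have "eventually (\<lambda>n. - d / 2 < v n / real (card (Is n))) sequentially"
        by (rule eventually_mono) simp
      then have ev1: "eventually (\<lambda>n. - d / 2 < v n / real (card (Is n))) p"
        by (rule fu_seq[OF fu])
      define e where "e = d / (2 * (real (card C) + 1))"
      have e: "0 < e" using d by (simp add: e_def)
      have "\<forall>x\<in>C. eventually (\<lambda>n. \<bar>x n / real (card (Is n)) - mu x\<bar> < e) p"
        using mu CX e unfolding plim_eq_def by blast
      then have ev2: "eventually (\<lambda>n. \<forall>x\<in>C. \<bar>x n / real (card (Is n)) - mu x\<bar> < e) p"
        by (rule eventually_ball_finite[OF finC])
      have "eventually (\<lambda>n. False) p"
        using eventually_conj[OF cardpos eventually_conj[OF ev1 ev2]]
      proof (rule eventually_mono)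
        fix n assume h: "0 < card (Is n) \<and> - d / 2 < v n / real (card (Is n)) \<and>
          (\<forall>x\<in>C. \<bar>x n / real (card (Is n)) - mu x\<bar> < e)"
        define k where "k = real (card (Is n))"
        have k: "0 < k" using h by (simp add: k_def)
        have "v n / k = y n / k - d" unfolding v_def iseq_def k_def[symmetric] using k
          by (simp add: field_simps)
        moreover have "- d / 2 < v n / k" using h k_def by simp
        ultimately have A: "d / 2 < y n / k" by linarith
        have zk: "\<bar>z x n\<bar> / k = \<bar>x n / k - mu x\<bar>" for x
          unfolding z_def iseq_def k_def[symmetric] using k
        proof -
          have "x n / k - mu x = (x n - mu x * k) / k" using k by (simp add: field_simps)
          then show "\<bar>x n - mu x * k\<bar> / k = \<bar>x n / k - mu x\<bar>" using k by (simp add: abs_div)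
        qed
        have "y n / k = (\<Sum>x\<in>C. \<bar>z x n\<bar> / k)" unfolding y_def by (simp add: sum_divide_distrib)
        also have "\<dots> \<le> (\<Sum>x\<in>C. e)"
          using h zk k_def by (intro sum_mono) (simp add: less_imp_le)
        also have "\<dots> = real (card C) * e" by simp
        also have "\<dots> < d / 2" using d unfolding e_def by (simp add: field_simps)
        finally show False using A by simp
      qed
      then show False using nb by simp
    qed
  qed
  then obtain wp where "\<forall>x\<in>XR Is. m x wp = mu x" by blast
  then show ?thesis unfolding mu_def by (intro exI[of _ wp]) (simp add: eq_commute)
qed

end
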